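(* Let $S\subseteq\mathbb{S}$ be nonempty. The Cournot game on $S$ has a unique pure Nash equilibrium, given for each $i\in S$ by $$\hat q_i=\frac{W(e^{\theta_i-1})}{1+\sum_{j\in S}W(e^{\theta_j-1})},\qquad \hat p_i=1+W(e^{\theta_i-1}).$$ Consequently, writing $w_i=W(e^{\theta_i-1})$, the equilibrium social welfare and revenue are $$\widehat{sw}(S)=\log\Big(1+\sum_{i\in S}w_i\Big)+\frac{\sum_{i\in S}(w_i^2+w_i)}{1+\sum_{i\in S}w_i},\qquad \widehat{re}(S)=\frac{\sum_{i\in S}(w_i^2+w_i)}{1+\sum_{i\in S}w_i}.$$
   Context: Sellers $\mathbb{S}=\{1,\dots,n\}$ with product qualities $\theta_i\ge0$. Cournot game on a displayed set $S$: seller $i\in S$ chooses a demand (quantity) $q_i$; the joint profile must lie in $\mathcal Q=\{\boldsymbol q:\ 0\le\sum_{i\in\bar S}q_i\le \frac{\sum_{i\in\bar S}e^{\theta_i}}{1+\sum_{i\in\bar S}e^{\theta_i}}\ \forall\bar S\subseteq S\}$; the resulting price is $p_i(\boldsymbol q)=\theta_i+\log(1-\sum_{j\in S}q_j)-\log q_i$ (the inverse of the MNL demand $q_i=e^{\theta_i-p_i}/(1+\sum_{j\in S}e^{\theta_j-p_j})$), and seller $i$'s payoff is $r_i(\boldsymbol q)=p_i(\boldsymbol q)q_i$. Social welfare is $\log(1+\sum_{j\in S}e^{\theta_j-p_j})+\sum_{i\in S}p_iq_i$ and revenue is $\sum_{i\in S}p_iq_i$. $W$ is the Lambert W function on $[0,\infty)$: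 $W(x)e^{W(x)}=x$. *)

theory Defs
  imports Complex_Main
begin

definition lambertW :: "real \<Rightarrow> real" where
  "lambertW x = (THE w. 0 \<le> w \<and> w * exp w = x)"

definition feasible :: "(nat \<Rightarrow> real) \<Rightarrow> nat set \<Rightarrow> (nat \<Rightarrow> real) set" where
  "feasible \<theta> S = {q. \<forall>S'. S' \<subseteq> S \<longrightarrow>
      0 \<le> (\<Sum>i\<in>S'. q i) \<and>
      (\<Sum>i\<in>S'. q i) \<le> (\<Sum>i\<in>S'. exp (\<theta> i)) / (1 + (\<Sum>i\<in>S'. exp (\<theta> i)))}"

text \<open>Inverse MNL price p_i(q) = theta_i + log(1 - sum_j q_j) - log q_i.\<close>
definition price :: "(nat \<Rightarrow> real) \<Rightarrow> nat set \<Rightarrow> (nat \<Rightarrow> real) \<Rightarrow> nat \<Rightarrow> real" where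
  "price \<theta> S q i = \<theta> i + ln (1 - (\<Sum>j\<in>S. q j)) - ln (q i)"

text \<open>Payoff r_i(q) = p_i(q) q_i (equals 0 when q_i = 0, the continuous extension).\<close>
definition payoff :: "(nat \<Rightarrow> real) \<Rightarrow> nat set \<Rightarrow> (nat \<Rightarrow> real) \<Rightarrow> nat \<Rightarrow> real" where
  "payoff \<theta> S q i = price \<theta> S q i * q i"

definition cournot_NE :: "(nat \<Rightarrow> real) \<Rightarrow> nat set \<Rightarrow> (nat \<Rightarrow> real) \<Rightarrow> bool" where
  "cournot_NE \<theta> S q \<longleftrightarrow> q \<in> feasible \<theta> S \<and>
     (\<forall>i\<in>S. \<forall>q'\<in>feasible \<theta> S. (\<forall>j\<in>S. j \<noteq> i \<longrightarrow> q' j = q j) \<longrightarrow>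
        payoff \<theta> S q' i \<le> payoff \<theta> S q i)"

definition revenue :: "(nat \<Rightarrow> real) \<Rightarrow> nat set \<Rightarrow> (nat \<Rightarrow> real) \<Rightarrow> real" where
  "revenue \<theta> S q = (\<Sum>i\<in>S. price \<theta> S q i * q i)"

definition social_welfare :: "(nat \<Rightarrow> real) \<Rightarrow> nat set \<Rightarrow> (nat \<Rightarrow> real) \<Rightarrow> real" where
  "social_welfare \<theta> S q =
     ln (1 + (\<Sum>j\<in>S. exp (\<theta> j - price \<theta> S q j))) + (\<Sum>i\<in>S. price \<theta> S q i * q i)"

end

theory Submission
  imports Defs
begin

lemma ln_lt: "0 < (t::real) \<Longrightarrow> t \<noteq> 1 \<Longrightarrow> ln t < t - 1"
  using ln_le_minus_one[of t] ln_eq_minus_one[of t] by fastforce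

lemma lambert_props:
  fixes th :: real
  defines "w \<equiv> lambertW (exp (th - 1))"
  shows "0 < w \<and> w * exp w = exp (th - 1) \<and> ln w + w = th - 1 \<and> w < exp th"
proof -
  define x where "x = exp (th - 1)"
  have x0: "x > 0" unfolding x_def by simp
  have cont: "\<forall>v. 0 \<le> v \<and> v \<le> x \<longrightarrow> isCont (\<lambda>v. v * exp v) v"
    by (intro allI impI continuous_intros)
  have "\<exists>v. 0 \<le> v \<and> v \<le> x \<and> v * exp v = x"
  proof (rule IVT[OF _ _ _ cont])
    show "0 * exp 0 \<le> x" using x0 by simp
    have "x * 1 \<le> x * exp x" using x0 by (intro mult_left_mono) auto
    thus "x \<le> x * exp x" by simp
    show "0 \<le> x" using x0 by simp
  qed
  then obtain v where v: "0 \<le> v" "v * exp v = x" by blast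
  have mono: "a * exp a < b * exp b" if "0 \<le> a" "a < b" for a b :: real
  proof -
    have "exp a < exp b" using that by simp
    thus ?thesis using that by (intro mult_strict_mono) auto
  qed
  have uniq: "u = v" if "0 \<le> u" "u * exp u = x" for u
  proof (rule ccontr)
    assume "u \<noteq> v"
    hence "u < v \<or> v < u" by linarith
    thus False using mono[of u v] mono[of v u] that v by auto
  qed
  have "w = v" unfolding w_def x_def[symmetric] lambertW_def
  proof (rule the_equality)
    show "0 \<le> v \<and> v * exp v = x" using v by simp
    fix u assume "0 \<le> u \<and> u * exp u = x" thus "u = v" using uniq by blast
  qed
  with v have w: "0 \<le> w" "w * exp w = x" by auto
  have wpos: "w > 0" using w x0 by (cases "w = 0") auto
  have "ln (w * exp w) = th - 1" using w unfolding x_def by simp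
  hence l: "ln w + w = th - 1" using wpos by (simp add: ln_mult)
  have "w \<le> w * exp w" using wpos by simp
  also have "\<dots> < exp th" using w unfolding x_def by simp
  finally have "w < exp th" .
  thus ?thesis using wpos w l unfolding x_def by blast
qed

definition FF :: "real \<Rightarrow> real \<Rightarrow> real \<Rightarrow> real" where
  "FF th u x = (th + ln (u - x) - ln x) * x"

lemma FF_bound:
  assumes "0 < w" "ln w + w = th - 1" "0 \<le> x" "x < u"
  shows "FF th u x \<le> w * u \<and> (FF th u x = w * u \<longleftrightarrow> x = w * u / (1 + w))"
proof (cases "x = 0")
  case True
  then show ?thesis using assms by (auto simp: FF_def)
next
  case False
  hence x0: "x > 0" using assms by auto
  define t where "t = w * (u - x) / x"
  have t0: "t > 0" unfolding t_def using assms x0 by auto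
  have lt: "ln t = ln w + ln (u - x) - ln x" unfolding t_def using assms x0
    by (simp add: ln_div ln_mult)
  have th: "th = 1 + w + ln w" using assms(2) by simp
  have F: "FF th u x = x * (1 + w + ln t)" unfolding FF_def lt th
    by (simp add: algebra_simps)
  have xt: "x * t = w * (u - x)" unfolding t_def using x0 by simp
  have "x * (1 + w + ln t) \<le> x * (1 + w + (t - 1))"
    using ln_le_minus_one[OF t0] x0 by (intro mult_left_mono) auto
  also have "\<dots> = w * u" using xt by (simp add: algebra_simps)
  finally have le: "FF th u x \<le> w * u" using F by simp
  have eq: "FF th u x = w * u \<longleftrightarrow> t = 1"
  proof
    assume h: "FF th u x = w * u"
    show "t = 1"
    proof (rule ccontr)
      assume "t \<noteq> 1"
      hence "x * (1 + w + ln t) < x * (1 + w + (t - 1))"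
        using ln_lt[OF t0] x0 by (intro mult_strict_left_mono) auto
      thus False using h F xt by (simp add: algebra_simps)
    qed
  next
    assume "t = 1" thus "FF th u x = w * u" using F xt by (simp add: algebra_simps)
  qed
  have "t = 1 \<longleftrightarrow> w * (u - x) = x" unfolding t_def using x0 by (auto simp: divide_eq_1_iff)
  also have "\<dots> \<longleftrightarrow> x * (1 + w) = w * u" by (auto simp: algebra_simps)
  also have "\<dots> \<longleftrightarrow> x = w * u / (1 + w)" using assms(1) by (simp add: eq_divide_eq)
  finally have "t = 1 \<longleftrightarrow> x = w * u / (1 + w)" .
  with le eq show ?thesis by simp
qed


lemma FF_mono:
  assumes w: "0 < w" "ln w + w = th - 1" and ab: "0 \<le> a" "a < b"
    and bx: "b \<le> w * u / (1 + w)" and bu: "b < u"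
  shows "FF th u a < FF th u b"
proof -
  have b0: "b > 0" using ab by linarith
  have bw: "b \<le> w * (u - b)" using bx w(1) by (simp add: field_simps)
  define z where "z = u - b"
  have z0: "z > 0" using bu z_def by simp
  have th: "th = 1 + w + ln w" using w(2) by simp
  have yw: "b / z \<le> w" using bw z0 unfolding z_def[symmetric] by (simp add: divide_simps mult.commute)
  have lyw: "ln (b / z) \<le> ln w" using yw b0 z0 w(1) by (subst ln_le_cancel_iff) auto
  have lnyz: "ln (b / z) = ln b - ln z" using b0 z0 by (simp add: ln_div)
  have K: "th + ln z - ln b - b / z - 1 \<ge> 0" using lyw yw lnyz th by linarith
  show ?thesis
  proof (cases "a = 0")
    case True
    have "FF th u b = (th + ln z - ln b) * b" unfolding FF_def z_def by simp
    also have "\<dots> > 0"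
    proof -
      have "b / z > 0" using b0 z0 by simp
      hence "th + ln z - ln b > 0" using K by linarith
      thus ?thesis using b0 by simp
    qed
    finally show ?thesis using True by (simp add: FF_def)
  next
    case False
    hence a0: "a > 0" using ab by simp
    define v where "v = u - a"
    have vz: "v - z = b - a" unfolding v_def z_def by simp
    have v0: "v > 0" using z0 vz ab by linarith
    have h1: "ln b - ln a < (b - a) / a" using ln_diff_less[of b a] a0 b0 ab by simp
    hence h1': "a * (ln b - ln a) < b - a" using a0 by (simp add: field_simps)
    have i1: "b * ln b - a * ln a < (ln b + 1) * (b - a)"
    proof -
      have "b * ln b - a * ln a = (b - a) * ln b + a * (ln b - ln a)" by (simp add: algebra_simps)
      thus ?thesis using h1' by (simp add: algebra_simps)
    qed
    have h2: "ln v - ln z \<le> (b - a) / z" using ln_diff_le[of v z] v0 z0 vz by simp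
    have h2': "a * (ln v - ln z) \<le> b * ((b - a) / z)"
    proof -
      have "a * (ln v - ln z) \<le> a * ((b - a) / z)" using h2 a0 by (intro mult_left_mono) auto
      also have "\<dots> \<le> b * ((b - a) / z)" using ab z0 by (intro mult_right_mono) auto
      finally show ?thesis .
    qed
    have i2: "b * ln z - a * ln v \<ge> (ln z - b / z) * (b - a)"
    proof -
      have "b * ln z - a * ln v = (b - a) * ln z - a * (ln v - ln z)" by (simp add: algebra_simps)
      moreover have "b * ((b - a) / z) = (b / z) * (b - a)" by simp
      ultimately show ?thesis using h2' by (simp add: algebra_simps)
    qed
    have D: "FF th u b - FF th u a = th * (b - a) + (b * ln z - a * ln v) - (b * ln b - a * ln a)"
      unfolding FF_def z_def v_def by (simp add: algebra_simps)
    have "(b - a) * (th + ln z - ln b - b / z - 1) \<ge> 0" using K ab by simp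
    hence "th * (b - a) + (ln z - b / z) * (b - a) - (ln b + 1) * (b - a) \<ge> 0"
      by (simp add: algebra_simps)
    thus ?thesis using D i1 i2 by linarith
  qed
qed

lemma payoff_FF:
  assumes "finite S" "i \<in> S" "\<forall>j\<in>S. j \<noteq> i \<longrightarrow> q' j = q j"
  shows "payoff \<theta> S q' i = FF (\<theta> i) (1 - (\<Sum>j\<in>S-{i}. q j)) (q' i)"
proof -
  have "(\<Sum>j\<in>S. q' j) = q' i + (\<Sum>j\<in>S-{i}. q' j)" using assms by (simp add: sum.remove)
  also have "(\<Sum>j\<in>S-{i}. q' j) = (\<Sum>j\<in>S-{i}. q j)" using assms(3) by (intro sum.cong) auto
  finally have e: "(\<Sum>j\<in>S. q' j) = q' i + (\<Sum>j\<in>S-{i}. q j)" .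
  show ?thesis unfolding payoff_def price_def FF_def e by (simp add: algebra_simps)
qed

lemma sum_upd:
  fixes q :: "'a \<Rightarrow> real"
  assumes "finite A"
  shows "(\<Sum>j\<in>A. (q(i:=x)) j) = (\<Sum>j\<in>A. q j) + (if i \<in> A then x - q i else 0)"
proof (cases "i \<in> A")
  case True
  have e1: "(\<Sum>j\<in>A. (q(i:=x)) j) = x + (\<Sum>j\<in>A-{i}. (q(i:=x)) j)" using assms True by (simp add: sum.remove)
  have e2: "(\<Sum>j\<in>A-{i}. (q(i:=x)) j) = (\<Sum>j\<in>A-{i}. q j)" by (intro sum.cong) auto
  have e3: "(\<Sum>j\<in>A. q j) = q i + (\<Sum>j\<in>A-{i}. q j)" using assms True by (simp add: sum.remove)
  have "(\<Sum>j\<in>A. (q(i:=x)) j) = (\<Sum>j\<in>A. q j) + (x - q i)" using e1 e2 e3 by linarith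
  thus ?thesis using True by simp
next
  case False
  hence "(\<Sum>j\<in>A. (q(i:=x)) j) = (\<Sum>j\<in>A. q j)" by (intro sum.cong) auto
  thus ?thesis using False by simp
qed

lemma feasible_props:
  assumes "q \<in> feasible \<theta> S" "finite S"
  shows "(\<forall>i\<in>S. 0 \<le> q i) \<and> (\<Sum>j\<in>S. q j) < 1"
proof -
  have A: "\<And>S'. S' \<subseteq> S \<Longrightarrow> 0 \<le> (\<Sum>i\<in>S'. q i) \<and>
      (\<Sum>i\<in>S'. q i) \<le> (\<Sum>i\<in>S'. exp (\<theta> i)) / (1 + (\<Sum>i\<in>S'. exp (\<theta> i)))"
    using assms(1) unfolding feasible_def mem_Collect_eq by blast
  have "\<forall>i\<in>S. 0 \<le> q i"
  proof
    fix i assume "i \<in> S"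
    hence "{i} \<subseteq> S" by simp
    from A[OF this] show "0 \<le> q i" by simp
  qed
  moreover have "(\<Sum>j\<in>S. q j) < 1"
  proof -
    define E where "E = (\<Sum>i\<in>S. exp (\<theta> i))"
    have E0: "E \<ge> 0" unfolding E_def by (intro sum_nonneg) auto
    have "(\<Sum>j\<in>S. q j) \<le> E / (1 + E)" using A[of S] unfolding E_def by simp
    also have "\<dots> < 1" using E0 by simp
    finally show ?thesis .
  qed
  ultimately show ?thesis by blast
qed

theorem theorem5:
  fixes n :: nat and \<theta> :: "nat \<Rightarrow> real" and S :: "nat set"
  assumes "\<forall>i\<in>{1..n}. \<theta> i \<ge> 0"
    and "S \<subseteq> {1..n}" and "S \<noteq> {}"
  defines "w \<equiv> (\<lambda>i. lambertW (exp (\<theta> i - 1)))"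
  defines "qhat \<equiv> (\<lambda>i. w i / (1 + (\<Sum>j\<in>S. w j)))"
  shows "cournot_NE \<theta> S qhat
    \<and> (\<forall>q. cournot_NE \<theta> S q \<longrightarrow> (\<forall>i\<in>S. q i = qhat i))
    \<and> (\<forall>i\<in>S. price \<theta> S qhat i = 1 + w i)
    \<and> social_welfare \<theta> S qhat =
        ln (1 + (\<Sum>i\<in>S. w i)) + (\<Sum>i\<in>S. w i ^ 2 + w i) / (1 + (\<Sum>i\<in>S. w i))
    \<and> revenue \<theta> S qhat = (\<Sum>i\<in>S. w i ^ 2 + w i) / (1 + (\<Sum>i\<in>S. w i))"
proof -
  have fin: "finite S" using assms(2) finite_subset by blast
  have LW: "\<And>i. 0 < w i \<and> w i * exp (w i) = exp (\<theta> i - 1) \<and> ln (w i) + w i = \<theta> i - 1 \<and> w i < exp (\<theta> i)"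
    unfolding w_def by (rule lambert_props)
  have wpos: "\<And>i. 0 < w i" using LW by blast
  have wln: "\<And>i. ln (w i) + w i = \<theta> i - 1" using LW by blast
  have wlt: "\<And>i. w i < exp (\<theta> i)" using LW by blast
  have wexp: "\<And>i. exp (\<theta> i - 1 - w i) = w i"
  proof -
    fix i
    have "exp (\<theta> i - 1 - w i) = exp (\<theta> i - 1) / exp (w i)" by (simp add: exp_diff)
    also have "\<dots> = w i" using LW[of i] by (simp add: field_simps)
    finally show "exp (\<theta> i - 1 - w i) = w i" .
  qed
  define W where "W = (\<Sum>j\<in>S. w j)"
  have W0: "W \<ge> 0" unfolding W_def using wpos by (intro sum_nonneg) (auto intro: less_imp_le)
  have qh: "\<And>i. qhat i = w i / (1 + W)" unfolding qhat_def W_def by simp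
  define Eb where "Eb = (\<lambda>S'. (\<Sum>i\<in>S'. exp (\<theta> i)) / (1 + (\<Sum>i\<in>S'. exp (\<theta> i))))"
  have feasI: "q \<in> feasible \<theta> S" if "\<And>S'. S' \<subseteq> S \<Longrightarrow> 0 \<le> (\<Sum>i\<in>S'. q i) \<and> (\<Sum>i\<in>S'. q i) \<le> Eb S'" for q
    using that unfolding feasible_def Eb_def by blast
  have feasD: "(\<Sum>i\<in>S'. q i) \<le> Eb S'" if "q \<in> feasible \<theta> S" "S' \<subseteq> S" for q S'
    using that unfolding feasible_def Eb_def by blast
  have Wlt: "(\<Sum>i\<in>S'. w i) < (\<Sum>i\<in>S'. exp (\<theta> i))" if "S' \<subseteq> S" "S' \<noteq> {}" for S'
    using that fin wlt by (intro sum_strict_mono) (auto intro: finite_subset)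
  have frac_mono: "x / (1 + x) \<le> y / (1 + y)" if "0 \<le> x" "x \<le> y" for x y :: real
    using that by (simp add: divide_simps algebra_simps)
  have frac_smono: "x / (1 + x) < y / (1 + y)" if "0 \<le> x" "x < y" for x y :: real
    using that by (simp add: divide_simps algebra_simps)
  have qhF: "qhat \<in> feasible \<theta> S"
  proof (rule feasI)
    fix S' assume S': "S' \<subseteq> S"
    have finS': "finite S'" using S' fin finite_subset by blast
    define W' where "W' = (\<Sum>i\<in>S'. w i)"
    have W'0: "W' \<ge> 0" unfolding W'_def using wpos by (intro sum_nonneg) (auto intro: less_imp_le)
    have W'W: "W' \<le> W" unfolding W'_def W_def using S' fin wpos by (intro sum_mono2) (auto intro: less_imp_le)
    have sq: "(\<Sum>i\<in>S'. qhat i) = W' / (1 + W)" unfolding qh W'_def by (simp add: sum_divide_distrib)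
    have "W' / (1 + W) \<le> W' / (1 + W')" using W'0 W'W W0 by (intro divide_left_mono) auto
    also have "\<dots> \<le> Eb S'" unfolding Eb_def
    proof (rule frac_mono)
      show "0 \<le> W'" by fact
      show "W' \<le> (\<Sum>i\<in>S'. exp (\<theta> i))" unfolding W'_def using wlt by (intro sum_mono) (auto intro: less_imp_le)
    qed
    finally show "0 \<le> (\<Sum>i\<in>S'. qhat i) \<and> (\<Sum>i\<in>S'. qhat i) \<le> Eb S'"
      using sq W'0 W0 by simp
  qed
  have sumqh: "(\<Sum>j\<in>S. qhat j) = W / (1 + W)" unfolding qh W_def by (simp add: sum_divide_distrib)
  have onem: "1 - W / (1 + W) = 1 / (1 + W)" using W0 by (simp add: field_simps)
  have price_eq: "\<forall>i\<in>S. price \<theta> S qhat i = 1 + w i"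
  proof
    fix i assume "i \<in> S"
    have "price \<theta> S qhat i = \<theta> i + ln (1 / (1 + W)) - ln (w i / (1 + W))"
      unfolding price_def sumqh onem qh ..
    also have "\<dots> = \<theta> i - ln (w i)" using W0 wpos[of i] by (simp add: ln_div)
    also have "\<dots> = 1 + w i" using wln[of i] by simp
    finally show "price \<theta> S qhat i = 1 + w i" .
  qed
  have NE: "cournot_NE \<theta> S qhat"
    unfolding cournot_NE_def
  proof (intro conjI ballI impI qhF)
    fix i q' assume i: "i \<in> S" and q'F: "q' \<in> feasible \<theta> S" and agree: "\<forall>j\<in>S. j \<noteq> i \<longrightarrow> q' j = qhat j"
    define u where "u = 1 - (\<Sum>j\<in>S-{i}. qhat j)"
    have sr: "(\<Sum>j\<in>S. qhat j) = qhat i + (\<Sum>j\<in>S-{i}. qhat j)" using fin i by (simp add: sum.remove)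
    have u: "u = (1 + w i) / (1 + W)" unfolding u_def using sr sumqh qh[of i] W0 by (simp add: field_simps)
    have P1: "payoff \<theta> S q' i = FF (\<theta> i) u (q' i)" unfolding u_def by (rule payoff_FF[OF fin i agree])
    have fp: "(\<forall>i\<in>S. 0 \<le> q' i) \<and> (\<Sum>j\<in>S. q' j) < 1" by (rule feasible_props[OF q'F fin])
    have sr': "(\<Sum>j\<in>S. q' j) = q' i + (\<Sum>j\<in>S-{i}. qhat j)"
    proof -
      have "(\<Sum>j\<in>S. q' j) = q' i + (\<Sum>j\<in>S-{i}. q' j)" using fin i by (simp add: sum.remove)
      also have "(\<Sum>j\<in>S-{i}. q' j) = (\<Sum>j\<in>S-{i}. qhat j)" using agree by (intro sum.cong) auto
      finally show ?thesis .
    qed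
    have "q' i < u" using fp sr' unfolding u_def by linarith
    hence "FF (\<theta> i) u (q' i) \<le> w i * u" using FF_bound[OF wpos wln] fp i by blast
    also have "w i * u = payoff \<theta> S qhat i"
      unfolding payoff_def using price_eq i u qh[of i] by (simp add: algebra_simps)
    finally show "payoff \<theta> S q' i \<le> payoff \<theta> S qhat i" using P1 by simp
  qed
  have UNIQ: "\<forall>q. cournot_NE \<theta> S q \<longrightarrow> (\<forall>i\<in>S. q i = qhat i)"
  proof (intro allI impI)
    fix q assume NEq: "cournot_NE \<theta> S q"
    have qF: "q \<in> feasible \<theta> S" and best: "\<And>i q'. i \<in> S \<Longrightarrow> q' \<in> feasible \<theta> S \<Longrightarrow>
        (\<forall>j\<in>S. j \<noteq> i \<longrightarrow> q' j = q j) \<Longrightarrow> payoff \<theta> S q' i \<le> payoff \<theta> S q i"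
      using NEq unfolding cournot_NE_def by blast+
    have fp: "(\<forall>i\<in>S. 0 \<le> q i) \<and> (\<Sum>j\<in>S. q j) < 1" by (rule feasible_props[OF qF fin])
    hence qnn: "\<And>i. i \<in> S \<Longrightarrow> 0 \<le> q i" by blast
    define Q where "Q = (\<Sum>j\<in>S. q j)"
    have Q1: "Q < 1" using fp Q_def by simp
    define u where "u = (\<lambda>j. 1 - (\<Sum>k\<in>S-{j}. q k))"
    have uQ: "\<And>j. j \<in> S \<Longrightarrow> u j = 1 - Q + q j" unfolding u_def Q_def using fin by (simp add: sum.remove)
    define xs where "xs = (\<lambda>j. w j * u j / (1 + w j))"
    have xs_nn: "\<And>j. j \<in> S \<Longrightarrow> 0 \<le> xs j" unfolding xs_def using uQ Q1 qnn wpos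
      by (smt (verit) divide_nonneg_pos mult_nonneg_nonneg)
    have xs_lt: "\<And>j. j \<in> S \<Longrightarrow> xs j < u j"
    proof -
      fix j assume j: "j \<in> S"
      have up: "u j > 0" using uQ[OF j] Q1 qnn[OF j] by linarith
      have "xs j * (1 + w j) = w j * u j" unfolding xs_def using wpos[of j] by (simp add: field_simps)
      hence "xs j * (1 + w j) < u j * (1 + w j)" using up by (simp add: algebra_simps)
      moreover have "0 < 1 + w j" using wpos[of j] by (simp add: add_pos_pos)
      ultimately show "xs j < u j" by simp
    qed
    have upd_agree: "\<forall>k\<in>S. k \<noteq> j \<longrightarrow> (q(j:=x)) k = q k" for j x by simp
    have upd_payoff: "payoff \<theta> S (q(j:=x)) j = FF (\<theta> j) (u j) x" if "j \<in> S" for j x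
    proof -
      have "payoff \<theta> S (q(j:=x)) j = FF (\<theta> j) (1 - (\<Sum>k\<in>S-{j}. q k)) ((q(j:=x)) j)"
        by (rule payoff_FF[OF fin that upd_agree])
      thus ?thesis unfolding u_def by simp
    qed
    have q_payoff: "payoff \<theta> S q j = FF (\<theta> j) (u j) (q j)" if "j \<in> S" for j
    proof -
      have "payoff \<theta> S q j = FF (\<theta> j) (1 - (\<Sum>k\<in>S-{j}. q k)) (q j)"
        by (rule payoff_FF[OF fin that]) simp
      thus ?thesis unfolding u_def by simp
    qed
    have upd_feas: "q(j:=x) \<in> feasible \<theta> S"
      if j: "j \<in> S" and x0: "0 \<le> x" and xb: "\<And>S'. S' \<subseteq> S \<Longrightarrow> j \<in> S' \<Longrightarrow> (\<Sum>k\<in>S'. q k) + (x - q j) \<le> Eb S'" for j x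
    proof (rule feasI)
      fix S' assume S': "S' \<subseteq> S"
      have finS': "finite S'" using S' fin finite_subset by blast
      have nn: "0 \<le> (\<Sum>k\<in>S'. (q(j:=x)) k)" using S' qnn x0 by (intro sum_nonneg) auto
      have "(\<Sum>k\<in>S'. (q(j:=x)) k) \<le> Eb S'"
      proof (cases "j \<in> S'")
        case True thus ?thesis using sum_upd[OF finS', of q j x] xb[OF S'] by simp
      next
        case False thus ?thesis using sum_upd[OF finS', of q j x] feasD[OF qF S'] by simp
      qed
      with nn show "0 \<le> (\<Sum>k\<in>S'. (q(j:=x)) k) \<and> (\<Sum>k\<in>S'. (q(j:=x)) k) \<le> Eb S'" by blast
    qed
    have le_xs: "q j \<le> xs j" if j: "j \<in> S" for j
    proof (rule ccontr)
      assume "\<not> q j \<le> xs j"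
      hence gt: "xs j < q j" by simp
      have F: "q(j := xs j) \<in> feasible \<theta> S"
      proof (rule upd_feas[OF j xs_nn[OF j]])
        fix S' assume S': "S' \<subseteq> S" "j \<in> S'"
        have "(\<Sum>k\<in>S'. q k) \<le> Eb S'" by (rule feasD[OF qF S'(1)])
        thus "(\<Sum>k\<in>S'. q k) + (xs j - q j) \<le> Eb S'" using gt by linarith
      qed
      have "payoff \<theta> S (q(j := xs j)) j \<le> payoff \<theta> S q j" by (rule best[OF j F upd_agree])
      hence c1: "FF (\<theta> j) (u j) (xs j) \<le> FF (\<theta> j) (u j) (q j)" using upd_payoff[OF j] q_payoff[OF j] by simp
      have c2: "FF (\<theta> j) (u j) (xs j) = w j * u j"
        using FF_bound[OF wpos wln xs_nn[OF j] xs_lt[OF j]] unfolding xs_def by simp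
      have qu: "q j < u j" using uQ[OF j] Q1 by simp
      have c3: "FF (\<theta> j) (u j) (q j) \<le> w j * u j \<and> (FF (\<theta> j) (u j) (q j) = w j * u j \<longleftrightarrow> q j = xs j)"
        using FF_bound[OF wpos wln qnn[OF j] qu] unfolding xs_def by simp
      have "FF (\<theta> j) (u j) (q j) = w j * u j" using c1 c2 c3 by linarith
      hence "q j = xs j" using c3 by blast
      thus False using gt by simp
    qed
    have le_wQ: "q j \<le> w j * (1 - Q)" if j: "j \<in> S" for j
    proof -
      have "q j * (1 + w j) \<le> w j * u j"
        using le_xs[OF j] wpos[of j] unfolding xs_def by (simp add: field_simps)
      thus ?thesis using uQ[OF j] by (simp add: algebra_simps)
    qed
    have slack: "(\<Sum>k\<in>S'. q k) < Eb S'" if S': "S' \<subseteq> S" "S' \<noteq> {}" for S'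
    proof -
      have finS': "finite S'" using S' fin finite_subset by blast
      define A where "A = (\<Sum>k\<in>S'. q k)"
      define W' where "W' = (\<Sum>i\<in>S'. w i)"
      have W'0: "W' \<ge> 0" unfolding W'_def using wpos by (intro sum_nonneg) (auto intro: less_imp_le)
      have "A \<le> (\<Sum>k\<in>S'. w k * (1 - Q))" unfolding A_def using S' le_wQ by (intro sum_mono) auto
      also have "\<dots> = W' * (1 - Q)" unfolding W'_def by (simp add: sum_distrib_right)
      also have "\<dots> \<le> W' * (1 - A)"
      proof -
        have "A \<le> Q" unfolding A_def Q_def using S' fin qnn by (intro sum_mono2) auto
        thus ?thesis using W'0 by (intro mult_left_mono) auto
      qed
      finally have "A * (1 + W') \<le> W'" by (simp add: algebra_simps)
      hence "A \<le> W' / (1 + W')" using W'0 by (simp add: field_simps)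
      also have "\<dots> < Eb S'" unfolding Eb_def W'_def using Wlt[OF S'] W'0 W'_def by (intro frac_smono) auto
      finally show ?thesis unfolding A_def .
    qed
    have eq_xs: "q i = xs i" if i: "i \<in> S" for i
    proof (rule ccontr)
      assume "q i \<noteq> xs i"
      hence lt: "q i < xs i" using le_xs[OF i] by simp
      define D where "D = (\<lambda>S'. Eb S' - (\<Sum>k\<in>S'. q k)) ` {S'. S' \<subseteq> S \<and> i \<in> S'}"
      have Dfin: "finite D" unfolding D_def using fin by simp
      have Dne: "D \<noteq> {}" unfolding D_def using i by blast
      define \<delta> where "\<delta> = Min D"
      have "\<forall>d\<in>D. 0 < d" unfolding D_def using slack by auto
      hence dpos: "\<delta> > 0" unfolding \<delta>_def using Min_gr_iff[OF Dfin Dne] by simp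
      have dle: "\<delta> \<le> Eb S' - (\<Sum>k\<in>S'. q k)" if "S' \<subseteq> S" "i \<in> S'" for S'
      proof -
        have "Eb S' - (\<Sum>k\<in>S'. q k) \<in> D" unfolding D_def using that by blast
        thus ?thesis unfolding \<delta>_def by (rule Min_le[OF Dfin])
      qed
      define b where "b = min (q i + \<delta>) (xs i)"
      have qb: "q i < b" unfolding b_def using lt dpos by simp
      have F: "q(i := b) \<in> feasible \<theta> S"
      proof (rule upd_feas[OF i])
        show "0 \<le> b" using qb qnn[OF i] by simp
        fix S' assume "S' \<subseteq> S" "i \<in> S'"
        thus "(\<Sum>k\<in>S'. q k) + (b - q i) \<le> Eb S'" using dle[of S'] unfolding b_def by linarith
      qed
      have "payoff \<theta> S (q(i := b)) i \<le> payoff \<theta> S q i" by (rule best[OF i F upd_agree])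
      hence "FF (\<theta> i) (u i) b \<le> FF (\<theta> i) (u i) (q i)" using upd_payoff[OF i] q_payoff[OF i] by simp
      moreover have "FF (\<theta> i) (u i) (q i) < FF (\<theta> i) (u i) b"
      proof (rule FF_mono[OF wpos wln qnn[OF i] qb])
        show "b \<le> w i * u i / (1 + w i)" unfolding b_def xs_def by simp
        show "b < u i" using xs_lt[OF i] unfolding b_def by simp
      qed
      ultimately show False by simp
    qed
    have qw: "q j = w j * (1 - Q)" if j: "j \<in> S" for j
    proof -
      have "q j * (1 + w j) = w j * u j"
        using eq_xs[OF j] wpos[of j] unfolding xs_def by (simp add: field_simps)
      thus ?thesis using uQ[OF j] by (simp add: algebra_simps)
    qed
    have "(\<Sum>j\<in>S. q j) = (\<Sum>j\<in>S. w j * (1 - Q))" by (rule sum.cong) (auto simp: qw)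
    hence "Q = (\<Sum>j\<in>S. w j * (1 - Q))" by (simp only: Q_def[symmetric])
    also have "\<dots> = W * (1 - Q)" unfolding W_def by (simp add: sum_distrib_right)
    finally have QW: "Q = W * (1 - Q)" .
    hence "1 - Q = 1 / (1 + W)" using W0 by (simp add: field_simps)
    thus "\<forall>i\<in>S. q i = qhat i" using qw qh by simp
  qed
  have rev: "revenue \<theta> S qhat = (\<Sum>i\<in>S. w i ^ 2 + w i) / (1 + W)"
  proof -
    have "revenue \<theta> S qhat = (\<Sum>i\<in>S. (w i ^ 2 + w i) / (1 + W))"
      unfolding revenue_def using price_eq qh by (intro sum.cong) (auto simp: power2_eq_square algebra_simps)
    thus ?thesis by (simp add: sum_divide_distrib)
  qed
  have sw: "social_welfare \<theta> S qhat = ln (1 + W) + (\<Sum>i\<in>S. w i ^ 2 + w i) / (1 + W)"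
  proof -
    have "(\<Sum>j\<in>S. exp (\<theta> j - price \<theta> S qhat j)) = W"
      unfolding W_def using price_eq wexp by (intro sum.cong) (auto simp: algebra_simps)
    thus ?thesis using rev unfolding social_welfare_def revenue_def by simp
  qed
  show ?thesis using NE UNIQ price_eq rev sw unfolding W_def by blast
qed

end
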